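(* Let $G$ be a real $n\times m$ matrix and $\mathbf v\in\mathbb R^n$, and let $\mathcal G=\{x\in\mathbb R^m: Gx\le \mathbf v\}$ (componentwise). Let $P$ be the nonnegative orthant of $\mathbb R^n$ and $F=\mathcal R(G)$. Let $\upsilon$ be the orthogonal projection of $\mathbf v$ onto $F^\perp$. Assume $\upsilon\ne0$ and $F\cap P=\{0\}$. Let $F_e=\mathrm{span}(\upsilon)+F$, and for $y\in F_e$ let $\beta(y)\in\mathbb R$ be the unique scalar such that $y-\beta(y)\upsilon\in F$. Then exactly one of the following three cases occurs. (a) $F_e\cap P=\{0\}$. In this case $\mathcal G=\emptyset$. (b) $F_e\cap P\neq\{0\}$ and $\beta(y)<0$ for every nonzero $y\in F_e\cap P$. In this case $\mathcal G=\emptyset$. (c) $F_e\cap P\neq\{0\}$ and $\beta(y)>0$ for every nonzero $y\in F_e\cap P$. In this case $\mathcal G\neq\emptyset$. *)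

theory Defs
  imports "HOL-Analysis.Analysis"
begin

definition orth_proj :: "'a::euclidean_space set \<Rightarrow> 'a \<Rightarrow> 'a" where
  "orth_proj S v = (THE u. u \<in> S \<and> v - u \<in> orthogonal_comp S)"

definition beta_coeff :: "'a::euclidean_space set \<Rightarrow> 'a \<Rightarrow> 'a \<Rightarrow> real" where
  "beta_coeff F u y = (THE b. y - b *\<^sub>R u \<in> F)"

definition nonneg_orthant :: "(real^'n) set" where
  "nonneg_orthant = {y. \<forall>i. 0 \<le> y $ i}"

end

theory Submission
  imports Defs
begin

lemma orth_proj_props:
  fixes F :: "'a::euclidean_space set"
  assumes sF: "subspace F"
  shows "orth_proj (orthogonal_comp F) v \<in> orthogonal_comp F \<and> v - orth_proj (orthogonal_comp F) v \<in> F"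
proof -
  obtain y z where y: "y \<in> span F" and z: "\<And>w. w \<in> span F \<Longrightarrow> orthogonal z w" and v: "v = y + z"
    using orthogonal_subspace_decomp_exists by blast
  have spF: "span F = F" using sF by simp
  have yF: "y \<in> F" using y unfolding spF .
  have zC: "z \<in> orthogonal_comp F"
    unfolding orthogonal_comp_def
  proof (intro CollectI ballI)
    fix w assume "w \<in> F"
    then have "orthogonal z w" using z span_base by blast
    then show "orthogonal w z" by (simp add: orthogonal_commute)
  qed
  have "orth_proj (orthogonal_comp F) v = z"
    unfolding orth_proj_def
  proof (rule the_equality)
    show "z \<in> orthogonal_comp F \<and> v - z \<in> orthogonal_comp (orthogonal_comp F)"
    proof
      show "z \<in> orthogonal_comp F" by (rule zC)
      have "v - z = y" using v by simp
      then show "v - z \<in> orthogonal_comp (orthogonal_comp F)"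
        using yF orthogonal_comp_subset by blast
    qed
  next
    fix u assume u: "u \<in> orthogonal_comp F \<and> v - u \<in> orthogonal_comp (orthogonal_comp F)"
    have "z - u \<in> orthogonal_comp F"
      using u zC subspace_orthogonal_comp subspace_diff by blast
    moreover have "z - u \<in> orthogonal_comp (orthogonal_comp F)"
    proof -
      have "v - u - y \<in> orthogonal_comp (orthogonal_comp F)"
        using u yF orthogonal_comp_subset subspace_orthogonal_comp subspace_diff by blast
      moreover have "v - u - y = z - u" using v by simp
      ultimately show ?thesis by simp
    qed
    ultimately have "(z - u) \<bullet> (z - u) = 0"
      unfolding orthogonal_comp_def orthogonal_def by blast
    then show "u = z" by simp
  qed
  then show ?thesis using zC yF v by simp
qed

lemma beta_coeff_eq:
  fixes F :: "'a::euclidean_space set"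
  assumes sF: "subspace F" and uF: "u \<notin> F" and f: "f \<in> F"
  shows "beta_coeff F u (c *\<^sub>R u + f) = c"
  unfolding beta_coeff_def
proof (rule the_equality)
  show "c *\<^sub>R u + f - c *\<^sub>R u \<in> F" using f by simp
next
  fix b assume "c *\<^sub>R u + f - b *\<^sub>R u \<in> F"
  then have "(c - b) *\<^sub>R u + f \<in> F" by (simp add: algebra_simps)
  then have h: "(c - b) *\<^sub>R u \<in> F" using f sF
    by (metis add_diff_cancel_right' subspace_diff)
  show "b = c"
  proof (rule ccontr)
    assume "b \<noteq> c"
    then have "inverse (c - b) *\<^sub>R ((c - b) *\<^sub>R u) \<in> F" using h sF subspace_scale by blast
    then show False using uF \<open>b \<noteq> c\<close> by simp
  qed
qed

theorem mainTheorem4: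
  fixes G :: "real^'m^'n" and v :: "real^'n"
  defines "\<G> \<equiv> {x :: real^'m. \<forall>i. (G *v x) $ i \<le> v $ i}"
      and "P \<equiv> (nonneg_orthant :: (real^'n) set)"
      and "F \<equiv> range (\<lambda>x. G *v x)"
  defines "\<upsilon> \<equiv> orth_proj (orthogonal_comp F) v"
  defines "Fe \<equiv> span {\<upsilon>} + F"
  defines "\<beta> \<equiv> beta_coeff F \<upsilon>"
  assumes "\<upsilon> \<noteq> 0"
      and "F \<inter> P = {0}"
  defines "caseA \<equiv> Fe \<inter> P = {0}"
      and "caseB \<equiv> Fe \<inter> P \<noteq> {0} \<and> (\<forall>y \<in> Fe \<inter> P. y \<noteq> 0 \<longrightarrow> \<beta> y < 0)"
      and "caseC \<equiv> Fe \<inter> P \<noteq> {0} \<and> (\<forall>y \<in> Fe \<inter> P. y \<noteq> 0 \<longrightarrow> \<beta> y > 0)"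
  shows "((caseA \<and> \<not> caseB \<and> \<not> caseC) \<or> (\<not> caseA \<and> caseB \<and> \<not> caseC)
           \<or> (\<not> caseA \<and> \<not> caseB \<and> caseC))
         \<and> (caseA \<longrightarrow> \<G> = {})
         \<and> (caseB \<longrightarrow> \<G> = {})
         \<and> (caseC \<longrightarrow> \<G> \<noteq> {})"
proof -
  have sF: "subspace F" unfolding F_def
    by (rule linear_subspace_image[OF matrix_vector_mul_linear subspace_UNIV])
  have uC: "\<upsilon> \<in> orthogonal_comp F" and vuF: "v - \<upsilon> \<in> F"
    using orth_proj_props[OF sF, of v] unfolding \<upsilon>_def by auto
  have uF: "\<upsilon> \<notin> F"
  proof
    assume "\<upsilon> \<in> F"
    then have "\<upsilon> \<bullet> \<upsilon> = 0" using uC unfolding orthogonal_comp_def orthogonal_def by blast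
    then show False using assms(7) by simp
  qed
  have beq: "\<And>c f. f \<in> F \<Longrightarrow> \<beta> (c *\<^sub>R \<upsilon> + f) = c"
    unfolding \<beta>_def using beta_coeff_eq[OF sF uF] by blast
  have Fe_iff: "\<And>y. y \<in> Fe \<longleftrightarrow> (\<exists>c f. f \<in> F \<and> y = c *\<^sub>R \<upsilon> + f)"
    unfolding Fe_def set_plus_def span_singleton by auto
  have P_iff: "\<And>y. y \<in> P \<longleftrightarrow> (\<forall>i. 0 \<le> y $ i)"
    unfolding P_def nonneg_orthant_def by simp
  have nz: "\<beta> y \<noteq> 0" if "y \<in> Fe \<inter> P" "y \<noteq> 0" for y
  proof
    assume b0: "\<beta> y = 0"
    have "y \<in> Fe" using that(1) by simp
    then obtain c f where f: "f \<in> F" and y: "y = c *\<^sub>R \<upsilon> + f" using Fe_iff[of y] by blast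
    have "c = 0" using b0 beq[OF f, of c] y by simp
    then have "y = f" using y by simp
    then have "y \<in> F \<inter> P" using f that(1) by simp
    then show False using assms(8) that by blast
  qed
  have nomix: False if y1: "y1 \<in> Fe \<inter> P" "y1 \<noteq> 0" "\<beta> y1 > 0"
    and y2: "y2 \<in> Fe \<inter> P" "y2 \<noteq> 0" "\<beta> y2 < 0" for y1 y2
  proof -
    have "y1 \<in> Fe" "y2 \<in> Fe" using y1(1) y2(1) by simp_all
    then obtain c1 f1 c2 f2 where f1: "f1 \<in> F" and e1: "y1 = c1 *\<^sub>R \<upsilon> + f1"
      and f2: "f2 \<in> F" and e2: "y2 = c2 *\<^sub>R \<upsilon> + f2" using Fe_iff[of y1] Fe_iff[of y2] by blast
    have c1: "c1 > 0" using beq[OF f1, of c1] e1 y1(3) by simp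
    have c2: "c2 < 0" using beq[OF f2, of c2] e2 y2(3) by simp
    define y where "y = (- c2) *\<^sub>R y1 + c1 *\<^sub>R y2"
    have "y = (- c2) *\<^sub>R f1 + c1 *\<^sub>R f2" unfolding y_def e1 e2 by (simp add: algebra_simps)
    moreover have "(- c2) *\<^sub>R f1 + c1 *\<^sub>R f2 \<in> F"
      using f1 f2 sF subspace_add subspace_scale by blast
    ultimately have yF: "y \<in> F" by simp
    have p1: "\<forall>i. 0 \<le> y1 $ i" and p2: "\<forall>i. 0 \<le> y2 $ i" using y1(1) y2(1) P_iff[of y1] P_iff[of y2] by auto
    have yP: "y \<in> P" unfolding P_iff y_def
    proof (simp, intro allI)
      fix i
      have "c2 * y1 $ i \<le> 0" using p1 c2 by (simp add: mult_nonpos_nonneg)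
      moreover have "0 \<le> c1 * y2 $ i" using p2 c1 by simp
      ultimately show "c2 * y1 $ i \<le> c1 * y2 $ i" by linarith
    qed
    obtain i where i: "y1 $ i \<noteq> 0" using y1(2) by (metis vec_eq_iff zero_index)
    have "y1 $ i > 0" using i p1 by (metis less_eq_real_def)
    then have "c2 * y1 $ i < 0" using c2 by (simp add: mult_neg_pos)
    moreover have "0 \<le> c1 * y2 $ i" using p2 c1 by simp
    ultimately have "y $ i > 0" unfolding y_def by simp
    moreover have "y = 0" using yF yP assms(8) by blast
    ultimately show False by simp
  qed
  have zin: "0 \<in> Fe \<inter> P"
  proof
    have "(0::real^'n) = 0 *\<^sub>R \<upsilon> + 0" by simp
    then show "0 \<in> Fe" using Fe_iff[of 0] subspace_0[OF sF] by blast
    show "0 \<in> P" using P_iff[of 0] by simp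
  qed
  have nonempty_imp: "\<exists>y \<in> Fe \<inter> P. y \<noteq> 0 \<and> \<beta> y > 0" if ne: "\<G> \<noteq> {}"
  proof -
    obtain x where "x \<in> \<G>" using ne by blast
    then have x: "\<forall>i. (G *v x) $ i \<le> v $ i" unfolding \<G>_def by simp
    define y where "y = v - G *v x"
    have "G *v x \<in> F" unfolding F_def by simp
    then have f: "(v - \<upsilon>) - G *v x \<in> F" using vuF sF subspace_diff by blast
    have ye: "y = 1 *\<^sub>R \<upsilon> + ((v - \<upsilon>) - G *v x)" unfolding y_def by simp
    have "y \<in> Fe" using ye f Fe_iff[of y] by blast
    moreover have "y \<in> P" using P_iff[of y] x by (simp add: y_def)
    moreover have "\<beta> y = 1" using ye beq[OF f, of 1] by simp
    moreover have "y \<noteq> 0"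
    proof
      assume "y = 0"
      then have "\<upsilon> = - ((v - \<upsilon>) - G *v x)" using ye by (simp add: eq_neg_iff_add_eq_0)
      then have "\<upsilon> \<in> F" using f sF subspace_neg by metis
      then show False using uF by simp
    qed
    ultimately show ?thesis by auto
  qed
  have C_imp: "\<G> \<noteq> {}" if "y \<in> Fe \<inter> P" "\<beta> y > 0" for y
  proof -
    have "y \<in> Fe" using that(1) by simp
    then obtain c f where f: "f \<in> F" and e: "y = c *\<^sub>R \<upsilon> + f" using Fe_iff[of y] by blast
    have c: "c > 0" using beq[OF f, of c] e that(2) by simp
    have "(v - \<upsilon>) - inverse c *\<^sub>R f \<in> F" using vuF f sF by (simp add: subspace_diff subspace_scale)
    then obtain x where x: "G *v x = (v - \<upsilon>) - inverse c *\<^sub>R f" unfolding F_def by auto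
    have "G *v x = v - inverse c *\<^sub>R y" unfolding x e using c by (simp add: algebra_simps)
    moreover have "\<forall>i. 0 \<le> y $ i" using that(1) P_iff[of y] by auto
    ultimately have "\<forall>i. (G *v x) $ i \<le> v $ i" using c by simp
    then show ?thesis unfolding \<G>_def by blast
  qed
  have exnz: "\<exists>y \<in> Fe \<inter> P. y \<noteq> 0" if "Fe \<inter> P \<noteq> {0}"
    using that zin by blast
  have tri: "caseA \<or> caseB \<or> caseC"
  proof (cases "Fe \<inter> P = {0}")
    case True then show ?thesis unfolding caseA_def by simp
  next
    case False
    show ?thesis
    proof (cases "\<exists>y \<in> Fe \<inter> P. y \<noteq> 0 \<and> \<beta> y > 0")
      case True
      then obtain y1 where "y1 \<in> Fe \<inter> P" "y1 \<noteq> 0" "\<beta> y1 > 0" by blast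
      have "\<forall>y \<in> Fe \<inter> P. y \<noteq> 0 \<longrightarrow> \<beta> y > 0"
      proof (intro ballI impI)
        fix y assume "y \<in> Fe \<inter> P" "y \<noteq> 0"
        moreover have "\<not> \<beta> y < 0" using nomix[OF \<open>y1 \<in> Fe \<inter> P\<close> \<open>y1 \<noteq> 0\<close> \<open>\<beta> y1 > 0\<close>] calculation by blast
        ultimately show "\<beta> y > 0" using nz[of y] by linarith
      qed
      then show ?thesis using False unfolding caseC_def by simp
    next
      case False2: False
      have "\<forall>y \<in> Fe \<inter> P. y \<noteq> 0 \<longrightarrow> \<beta> y < 0"
      proof (intro ballI impI)
        fix y assume "y \<in> Fe \<inter> P" "y \<noteq> 0"
        moreover have "\<not> \<beta> y > 0" using False2 calculation by blast
        ultimately show "\<beta> y < 0" using nz[of y] by linarith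
      qed
      then show ?thesis using False unfolding caseB_def by simp
    qed
  qed
  have notBC: "\<not> (caseB \<and> caseC)"
  proof
    assume h: "caseB \<and> caseC"
    then obtain y where "y \<in> Fe \<inter> P" "y \<noteq> 0" using exnz unfolding caseB_def by blast
    then have "\<beta> y < 0" "\<beta> y > 0" using h unfolding caseB_def caseC_def by blast+
    then show False by simp
  qed
  have GA: "caseA \<longrightarrow> \<G> = {}" using nonempty_imp unfolding caseA_def by blast
  have GB: "caseB \<longrightarrow> \<G> = {}"
  proof
    assume "caseB"
    then have hb: "\<forall>y \<in> Fe \<inter> P. y \<noteq> 0 \<longrightarrow> \<beta> y < 0" unfolding caseB_def by blast
    show "\<G> = {}"
    proof (rule ccontr)
      assume "\<G> \<noteq> {}"
      then obtain y where "y \<in> Fe \<inter> P" "y \<noteq> 0" "\<beta> y > 0" using nonempty_imp by blast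
      then show False using hb by force
    qed
  qed
  have GC: "caseC \<longrightarrow> \<G> \<noteq> {}"
  proof
    assume h: caseC
    then obtain y where "y \<in> Fe \<inter> P" "y \<noteq> 0" using exnz unfolding caseC_def by blast
    then show "\<G> \<noteq> {}" using h C_imp unfolding caseC_def by blast
  qed
  have notAB: "\<not> (caseA \<and> caseB)" unfolding caseA_def caseB_def by simp
  have notAC: "\<not> (caseA \<and> caseC)" unfolding caseA_def caseC_def by simp
  show ?thesis using tri notBC notAB notAC GA GB GC by blast
qed

end
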